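(* In the single-node deterministic selection process described in the context, let $c_8>0$ be arbitrary, and set $c_4=(b-1)\big((c_1/\Delta_{\min}(i))^{1/c_2}+1\big)$, $c_6=1-c_3/c_2$, $\xi(j)=\big((c_1/\Delta(j))^{1/c_2}+1\big)^{c_8}$ and $$c_7=(b-1)\Big(\max_{j\neq j^*}\xi(j)+(2(b-1))^{c_8}\Big)+(2c_4)^{c_8}.$$ Then for all $z>0$ and all $\tau\ge1$, $$\mathbb{P}\Big[\big|\mathbb{E}[V_\tau(i)]-V_\tau(i)\big|\ge\frac{z}{\tau^{c_6}}\Big]\le\frac{c_7}{z^{c_8}}.$$
   Context: Fix constants $c_1>0$ and $0<c_3<c_2$. A node $i$ has a finite set $C(i)$ of $b\ge2$ children; each child $j$ has a deterministic value $Q^*(j)\in[0,1]$, and there is a unique maximizer $j^*=\arg\max_{j\in C(i)}Q^*(j)$. Set $V^*(i)=Q^*(j^* )$, $\Delta(j)=Q^*(j^* )-Q^*(j)$ and $\Delta_{\min}(i)=\min_{j\neq j^*}\Delta(j)>0$. The node is visited at times $s=1,2,\dots$; at visit $s$ one child $\mu(s)$ is selected and yields value $Q^*(\mu(s))$. Let $T(i,s)=s-1$ be the number of previous visits to $i$ and $T(j,s)$ the number of previous selections of $j$ (before visit $s$). Selection rule: if some child has $T(j,s)=0$, select one such child (chosen at random); otherwise select a maximizer of $Q^*(j)+c_1\,T(i,s)^{c_3}/T(j,s)^{c_2}$, ties broken at random. After $\tau$ visits, $T_\tau(j)$ denotes the number of selections of $j$ among visits $1,\dots,\tau$, and $V_\tau(i)=\frac1\tau\sum_{s=1}^{\tau}Q^*(\mu(s))$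 is the average value of node $i$. *)

theory Defs
  imports "HOL-Probability.Probability"
begin

text \<open>Selection process at a single node i with children set C, child values Q.
  State = counts function T (number of previous selections of each child).
  At visit s (with s - 1 previous visits), the set of admissible children is
  computed; one of them is selected uniformly at random.\<close>

definition sel_index :: "real \<Rightarrow> real \<Rightarrow> real \<Rightarrow> ('c \<Rightarrow> real) \<Rightarrow> nat \<Rightarrow> ('c \<Rightarrow> nat) \<Rightarrow> 'c \<Rightarrow> real" where
  "sel_index c1 c2 c3 Q s T j = Q j + c1 * real (s - 1) powr c3 / real (T j) powr c2"

definition admissible :: "'c set \<Rightarrow> real \<Rightarrow> real \<Rightarrow> real \<Rightarrow> ('c \<Rightarrow> real) \<Rightarrow> nat \<Rightarrow> ('c \<Rightarrow> nat) \<Rightarrow> 'c set" where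
  "admissible C c1 c2 c3 Q s T =
     (if \<exists>j\<in>C. T j = 0 then {j\<in>C. T j = 0}
      else {j\<in>C. \<forall>k\<in>C. sel_index c1 c2 c3 Q s T k \<le> sel_index c1 c2 c3 Q s T j})"

fun counts_after :: "'c set \<Rightarrow> real \<Rightarrow> real \<Rightarrow> real \<Rightarrow> ('c \<Rightarrow> real) \<Rightarrow> nat \<Rightarrow> ('c \<Rightarrow> nat) pmf" where
  "counts_after C c1 c2 c3 Q 0 = return_pmf (\<lambda>_. 0)"
| "counts_after C c1 c2 c3 Q (Suc n) =
     bind_pmf (counts_after C c1 c2 c3 Q n)
       (\<lambda>T. map_pmf (\<lambda>j. T(j := T j + 1)) (pmf_of_set (admissible C c1 c2 c3 Q (Suc n) T)))"

text \<open>Average value V_tau(i) = (1/tau) sum_s Q(mu(s)) = (1/tau) sum_j T_tau(j) Q(j).\<close>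
definition avg_value :: "'c set \<Rightarrow> ('c \<Rightarrow> real) \<Rightarrow> nat \<Rightarrow> ('c \<Rightarrow> nat) \<Rightarrow> real" where
  "avg_value C Q \<tau> T = (\<Sum>j\<in>C. real (T j) * Q j) / real \<tau>"

end

theory Submission
  imports Defs
begin

lemma key_ineq:
  fixes t u n qj qs c1 c2 c3 d :: real
  assumes "c1 > 0" "c2 > 0" "c3 > 0" "d > 0" "t > 0" "n \<ge> 0" "u \<ge> 0"
    and "qs + c1 * n powr c3 / u powr c2 \<le> qj + c1 * n powr c3 / t powr c2"
    and "qs - qj \<ge> d"
  shows "t \<le> (c1 / d) powr (1 / c2) * n powr (c3 / c2)"
proof -
  have "c1 * n powr c3 / u powr c2 \<ge> 0" using assms by simp
  hence h: "d \<le> c1 * n powr c3 / t powr c2" using assms by linarith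
  have tp: "t powr c2 > 0" using assms by simp
  have "t powr c2 \<le> c1 * n powr c3 / d"
    using h tp assms by (simp add: field_simps)
  hence "(t powr c2) powr (1/c2) \<le> (c1 * n powr c3 / d) powr (1/c2)"
    by (intro powr_mono2) (use assms in auto)
  also have "(t powr c2) powr (1/c2) = t" using assms by (simp add: powr_powr)
  also have "(c1 * n powr c3 / d) powr (1/c2) = (c1/d) powr (1/c2) * (n powr c3) powr (1/c2)"
    using assms powr_mult[of "c1/d" "n powr c3" "1/c2"] by simp
  also have "(n powr c3) powr (1/c2) = n powr (c3/c2)" by (simp add: powr_powr)
  finally show ?thesis .
qed

lemma admissible_ne:
  assumes "finite C" "C \<noteq> {}"
  shows "admissible C c1 c2 c3 Q s T \<noteq> {}" "finite (admissible C c1 c2 c3 Q s T)"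
    "admissible C c1 c2 c3 Q s T \<subseteq> C"
proof -
  show "admissible C c1 c2 c3 Q s T \<subseteq> C" unfolding admissible_def by auto
  thus "finite (admissible C c1 c2 c3 Q s T)" using assms finite_subset by blast
  show "admissible C c1 c2 c3 Q s T \<noteq> {}"
  proof (cases "\<exists>j\<in>C. T j = 0")
    case True then show ?thesis unfolding admissible_def by auto
  next
    case False
    let ?f = "sel_index c1 c2 c3 Q s T"
    have "Max (?f ` C) \<in> ?f ` C" using assms by (intro Max_in) auto
    then obtain j where jC: "j \<in> C" and fj: "?f j = Max (?f ` C)" by auto
    have "\<forall>k\<in>C. ?f k \<le> ?f j" using assms fj by (auto intro: Max_ge)
    hence "j \<in> admissible C c1 c2 c3 Q s T" using jC False unfolding admissible_def by auto
    then show ?thesis by blast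
  qed
qed

lemma invariant:
  fixes C :: "'c set" and Q :: "'c \<Rightarrow> real"
  assumes "finite C" "C \<noteq> {}" "jstar \<in> C"
    and "c1 > 0" "c2 > 0" "c3 > 0" "d > 0"
    and "\<forall>j\<in>C. j \<noteq> jstar \<longrightarrow> Q jstar - Q j \<ge> d"
  defines "A \<equiv> (c1 / d) powr (1 / c2)"
  shows "T \<in> set_pmf (counts_after C c1 c2 c3 Q n) \<Longrightarrow>
    (\<Sum>j\<in>C. T j) = n \<and> (\<forall>j\<in>C - {jstar}. real (T j) \<le> A * real n powr (c3/c2) + 1)"
proof (induction n arbitrary: T)
  case 0
  then show ?case by simp
next
  case (Suc n)
  let ?S = "admissible C c1 c2 c3 Q (Suc n)"
  from Suc.prems obtain T0 j where T0: "T0 \<in> set_pmf (counts_after C c1 c2 c3 Q n)"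
    and j: "j \<in> ?S T0" and T: "T = T0(j := T0 j + 1)"
    using admissible_ne[OF assms(1,2)] by (auto simp: set_pmf_of_set)
  note IH = Suc.IH[OF T0]
  have jC: "j \<in> C" using j admissible_ne(3)[OF assms(1,2)] by blast
  have A0: "A \<ge> 0" unfolding A_def by simp
  have sum: "(\<Sum>k\<in>C. T k) = Suc n"
  proof -
    have "(\<Sum>k\<in>C. T k) = T j + (\<Sum>k\<in>C-{j}. T k)" using jC assms(1) by (simp add: sum.remove)
    also have "(\<Sum>k\<in>C-{j}. T k) = (\<Sum>k\<in>C-{j}. T0 k)" by (rule sum.cong) (auto simp: T)
    also have "T j + \<dots> = 1 + (\<Sum>k\<in>C. T0 k)" using jC assms(1) by (simp add: T sum.remove)
    finally show ?thesis using IH by simp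
  qed
  have mono: "A * real n powr (c3/c2) + 1 \<le> A * real (Suc n) powr (c3/c2) + 1"
    using A0 assms by (intro add_mono mult_left_mono powr_mono2) auto
  have "real (T k) \<le> A * real (Suc n) powr (c3/c2) + 1" if k: "k \<in> C - {jstar}" for k
  proof (cases "k = j")
    case False
    have e: "T k = T0 k" using False T by simp
    have "real (T0 k) \<le> A * real n powr (c3/c2) + 1" using IH k by blast
    thus ?thesis using e mono by linarith
  next
    case True
    show ?thesis
    proof (cases "\<exists>i\<in>C. T0 i = 0")
      case z: True
      hence "T0 j = 0" using j unfolding admissible_def by auto
      moreover have "A * real (Suc n) powr (c3/c2) \<ge> 0" using A0 by simp
      ultimately show ?thesis using True by (simp add: T)
    next
      case nz: False
      have "j \<in> {j \<in> C. \<forall>k\<in>C. sel_index c1 c2 c3 Q (Suc n) T0 k \<le> sel_index c1 c2 c3 Q (Suc n) T0 j}"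
        using j unfolding admissible_def by (simp only: if_not_P[OF nz])
      hence sel: "sel_index c1 c2 c3 Q (Suc n) T0 jstar \<le> sel_index c1 c2 c3 Q (Suc n) T0 j"
        using assms(3) by blast
      have "real (T0 j) \<le> A * real n powr (c3/c2)"
        unfolding A_def
        apply (rule key_ineq[where u="real (T0 jstar)" and qj="Q j" and qs="Q jstar"])
        using assms nz jC sel k True by (auto simp: sel_index_def)
      hence "real (T0 j) + 1 \<le> A * real (Suc n) powr (c3/c2) + 1" using mono by linarith
      then show ?thesis using True by (simp add: T)
    qed
  qed
  then show ?case using sum by blast
qed

theorem lemma8:
  fixes C :: "'c set" and Q :: "'c \<Rightarrow> real" and jstar :: 'c
    and c1 c2 c3 c8 :: real and b :: nat
  assumes "finite C" and "card C = b" and "b \<ge> 2"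
    and "\<forall>j\<in>C. 0 \<le> Q j \<and> Q j \<le> 1"
    and "jstar \<in> C" and "\<forall>j\<in>C. j \<noteq> jstar \<longrightarrow> Q j < Q jstar"
    and "c1 > 0" and "0 < c3" and "c3 < c2" and "c8 > 0"
  defines "\<Delta> \<equiv> (\<lambda>j. Q jstar - Q j)"
  defines "\<Delta>min \<equiv> Min (\<Delta> ` (C - {jstar}))"
  defines "c4 \<equiv> real (b - 1) * ((c1 / \<Delta>min) powr (1 / c2) + 1)"
  defines "c6 \<equiv> 1 - c3 / c2"
  defines "\<xi> \<equiv> (\<lambda>j. ((c1 / \<Delta> j) powr (1 / c2) + 1) powr c8)"
  defines "c7 \<equiv> real (b - 1) * (Max (\<xi> ` (C - {jstar})) + (2 * real (b - 1)) powr c8)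
                + (2 * c4) powr c8"
  shows "\<forall>z::real. \<forall>\<tau>::nat. z > 0 \<longrightarrow> \<tau> \<ge> 1 \<longrightarrow>
    measure_pmf.prob (counts_after C c1 c2 c3 Q \<tau>)
      {T. \<bar>measure_pmf.expectation (counts_after C c1 c2 c3 Q \<tau>) (avg_value C Q \<tau>)
           - avg_value C Q \<tau> T\<bar> \<ge> z / real \<tau> powr c6}
    \<le> c7 / z powr c8"
proof (intro allI impI)
  fix z :: real and \<tau> :: nat
  assume z: "z > 0" and tau: "\<tau> \<ge> 1"
  have c2: "c2 > 0" using assms by linarith
  have Cne: "C \<noteq> {}" using assms by auto
  have cardD: "card (C - {jstar}) = b - 1" using assms by (simp add: card_Diff_singleton)
  have Dne: "C - {jstar} \<noteq> {}" proof
    assume "C - {jstar} = {}" hence "b - 1 = 0" using cardD by (metis card.empty)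
    then show False using assms(3) by linarith
  qed
  have Df: "finite (C - {jstar})" using assms by simp
  have dpos: "\<Delta>min > 0" unfolding \<Delta>min_def using Dne Df assms(6) by (auto simp: Min_gr_iff \<Delta>_def)
  have dle: "\<forall>j\<in>C. j \<noteq> jstar \<longrightarrow> Q jstar - Q j \<ge> \<Delta>min"
    unfolding \<Delta>min_def \<Delta>_def using Df by (auto intro: Min_le)
  define A where "A = (c1 / \<Delta>min) powr (1 / c2)"
  define p where "p = c3 / c2"
  define P where "P = counts_after C c1 c2 c3 Q \<tau>"
  define V where "V = avg_value C Q \<tau>"
  have A0: "A \<ge> 0" unfolding A_def by simp
  have c4A: "c4 = real (b-1) * (A + 1)" unfolding c4_def A_def by simp
  have c40: "c4 \<ge> 0" using A0 c4A by simp
  have tpos: "real \<tau> > 0" using tau by simp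
  define M where "M = c4 / real \<tau> powr c6"
  have tp1: "real \<tau> powr p \<ge> 1" using tau assms c2 unfolding p_def by (intro ge_one_powr_ge_zero) auto
  have c6eq: "real \<tau> powr c6 = real \<tau> / real \<tau> powr p"
    unfolding c6_def p_def using tpos by (simp add: powr_diff)
  have inv: "(\<Sum>j\<in>C. T j) = \<tau> \<and> (\<forall>j\<in>C - {jstar}. real (T j) \<le> A * real \<tau> powr p + 1)"
    if "T \<in> set_pmf P" for T
    using invariant[OF assms(1) Cne assms(5) assms(7) c2 assms(8) dpos dle] that
    unfolding P_def A_def p_def by blast
  have bnd: "Q jstar - M \<le> V T \<and> V T \<le> Q jstar" if "T \<in> set_pmf P" for T
  proof -
    note I = inv[OF that]
    have s1: "(\<Sum>j\<in>C. real (T j) * Q j) = real \<tau> * Q jstar - (\<Sum>j\<in>C. real (T j) * \<Delta> j)"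
    proof -
      have "(\<Sum>j\<in>C. real (T j) * Q j) = (\<Sum>j\<in>C. real (T j) * Q jstar - real (T j) * \<Delta> j)"
        by (rule sum.cong) (auto simp: \<Delta>_def algebra_simps)
      also have "\<dots> = (\<Sum>j\<in>C. real (T j)) * Q jstar - (\<Sum>j\<in>C. real (T j) * \<Delta> j)"
        by (simp add: sum_subtractf sum_distrib_right)
      also have "(\<Sum>j\<in>C. real (T j)) = real \<tau>" using I by (metis of_nat_sum)
      finally show ?thesis .
    qed
    have s2: "(\<Sum>j\<in>C. real (T j) * \<Delta> j) = (\<Sum>j\<in>C-{jstar}. real (T j) * \<Delta> j)"
      using assms(1,5) by (simp add: sum.remove \<Delta>_def)
    have lo: "(\<Sum>j\<in>C-{jstar}. real (T j) * \<Delta> j) \<ge> 0"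
      using assms(6) by (intro sum_nonneg) (auto simp: \<Delta>_def)
    have "(\<Sum>j\<in>C-{jstar}. real (T j) * \<Delta> j) \<le> (\<Sum>j\<in>C-{jstar}. A * real \<tau> powr p + 1)"
    proof (rule sum_mono)
      fix j assume jj: "j \<in> C - {jstar}"
      have "0 \<le> Q j" "Q jstar \<le> 1" "Q j < Q jstar" using assms(4,5,6) jj by auto
      hence "\<Delta> j \<le> 1" "\<Delta> j \<ge> 0" by (auto simp: \<Delta>_def)
      hence "real (T j) * \<Delta> j \<le> real (T j)" by (simp add: mult_left_le)
      thus "real (T j) * \<Delta> j \<le> A * real \<tau> powr p + 1" using I jj by force
    qed
    also have "\<dots> = real (b-1) * (A * real \<tau> powr p + 1)" using cardD by simp
    also have "\<dots> \<le> real (b-1) * ((A + 1) * real \<tau> powr p)"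
      using tp1 by (intro mult_left_mono) (auto simp: algebra_simps)
    also have "\<dots> = M * real \<tau>" unfolding M_def c4A c6eq using tpos tp1 by (simp add: field_simps)
    finally have up: "(\<Sum>j\<in>C-{jstar}. real (T j) * \<Delta> j) \<le> M * real \<tau>" .
    have "V T = Q jstar - (\<Sum>j\<in>C-{jstar}. real (T j) * \<Delta> j) / real \<tau>"
      unfolding V_def avg_value_def s1 s2 using tpos by (simp add: field_simps)
    moreover have "(\<Sum>j\<in>C-{jstar}. real (T j) * \<Delta> j) / real \<tau> \<le> M"
      using up tpos by (simp add: divide_le_eq)
    moreover have "(\<Sum>j\<in>C-{jstar}. real (T j) * \<Delta> j) / real \<tau> \<ge> 0" using lo tpos by simp
    ultimately show ?thesis by linarith
  qed
  have M0: "M \<ge> 0" unfolding M_def using c40 by simp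
  have absb: "\<bar>V T\<bar> \<le> \<bar>Q jstar\<bar> + M" if "T \<in> set_pmf P" for T
    using bnd[OF that] M0 by arith
  have integ: "integrable (measure_pmf P) V"
    apply (rule measure_pmf.integrable_const_bound[where B="\<bar>Q jstar\<bar> + M"])
    using absb by (auto simp: AE_measure_pmf_iff)
  have E1: "measure_pmf.expectation P V \<le> Q jstar"
    by (rule measure_pmf.integral_le_const[OF integ]) (use bnd in \<open>auto simp: AE_measure_pmf_iff\<close>)
  have E2: "Q jstar - M \<le> measure_pmf.expectation P V"
    by (rule measure_pmf.integral_ge_const[OF integ]) (use bnd in \<open>auto simp: AE_measure_pmf_iff\<close>)
  have dev: "\<bar>measure_pmf.expectation P V - V T\<bar> \<le> M" if "T \<in> set_pmf P" for T
    using bnd[OF that] E1 E2 by linarith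
  have Mx0: "Max (\<xi> ` (C - {jstar})) \<ge> 0"
  proof -
    obtain j where "j \<in> C - {jstar}" using Dne by blast
    hence "\<xi> j \<le> Max (\<xi> ` (C - {jstar}))" using Df by (intro Max_ge) auto
    moreover have "\<xi> j \<ge> 0" unfolding \<xi>_def by simp
    ultimately show ?thesis by linarith
  qed
  have c7ge: "c7 \<ge> (2 * c4) powr c8" unfolding c7_def using Mx0 by simp
  have zp: "z powr c8 > 0" using z by simp
  have main: "measure_pmf.prob P {T. \<bar>measure_pmf.expectation P V - V T\<bar> \<ge> z / real \<tau> powr c6} \<le> c7 / z powr c8"
  proof (cases "z > c4")
    case True
    have "set_pmf P \<inter> {T. \<bar>measure_pmf.expectation P V - V T\<bar> \<ge> z / real \<tau> powr c6} = {}"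
    proof (auto)
      fix T assume T: "T \<in> set_pmf P" and ge: "z / real \<tau> powr c6 \<le> \<bar>measure_pmf.expectation P V - V T\<bar>"
      have "M < z / real \<tau> powr c6" unfolding M_def using True tpos by (simp add: divide_strict_right_mono)
      thus False using dev[OF T] ge by linarith
    qed
    hence "measure_pmf.prob P {T. \<bar>measure_pmf.expectation P V - V T\<bar> \<ge> z / real \<tau> powr c6} = 0"
      by (simp add: measure_pmf_zero_iff)
    moreover have "c7 \<ge> 0" using c7ge powr_ge_zero[of "2*c4" c8] by linarith
    hence "c7 / z powr c8 \<ge> 0" using zp by simp
    ultimately show ?thesis by simp
  next
    case False
    have "z powr c8 \<le> c4 powr c8" using False z assms by (intro powr_mono2) auto
    also have "\<dots> \<le> (2*c4) powr c8" using c40 assms by (intro powr_mono2) auto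
    finally have "z powr c8 \<le> c7" using c7ge by linarith
    hence "1 \<le> c7 / z powr c8" using zp by simp
    thus ?thesis using measure_pmf.prob_le_1 order_trans by blast
  qed
  then show "measure_pmf.prob (counts_after C c1 c2 c3 Q \<tau>)
      {T. \<bar>measure_pmf.expectation (counts_after C c1 c2 c3 Q \<tau>) (avg_value C Q \<tau>)
           - avg_value C Q \<tau> T\<bar> \<ge> z / real \<tau> powr c6}
    \<le> c7 / z powr c8" unfolding P_def V_def .
qed

end
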